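(* Let $R$ be a semisimple 2-primal ring. Then $R$ satisfies the complete radical formula, i.e., for every left $R$-module $M$ and every submodule $N$ of $M$, $\langle E_M(N)\rangle=\beta^s_{co}(N)$.
   Context: Rings are associative with identity; modules are unital left modules. $R$ is semisimple if ${}_RR$ is a direct sum of simple submodules; $R$ is 2-primal if its set of nilpotent elements equals its prime radical. A submodule $P$ of $M$ is completely prime if $RM\not\subseteq P$ and for $r\in R$, $m\in M$, $rm\in P$ implies $m\in P$ or $rM\subseteq P$. $\beta^s_{co}(N)$ is the intersection of all completely prime submodules of $M$ containing $N$ ($=M$ if none). $E_M(N)=\{rm: r\in R, m\in M, r^km\in N\text{ for some }k\in\mathbb N\}$ and $\langle E_M(N)\rangle$ is the submodule it generates. *)

theory Defs
  imports Main
begin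

definition lmodule :: "('r::ring_1 \<Rightarrow> 'm::ab_group_add \<Rightarrow> 'm) \<Rightarrow> bool" where
  "lmodule sm \<longleftrightarrow>
     (\<forall>r x y. sm r (x + y) = sm r x + sm r y) \<and>
     (\<forall>r s x. sm (r + s) x = sm r x + sm s x) \<and>
     (\<forall>r s x. sm (r * s) x = sm r (sm s x)) \<and>
     (\<forall>x. sm 1 x = x)"

definition submodule :: "('r::ring_1 \<Rightarrow> 'm::ab_group_add \<Rightarrow> 'm) \<Rightarrow> 'm set \<Rightarrow> bool" where
  "submodule sm N \<longleftrightarrow>
     0 \<in> N \<and> (\<forall>x\<in>N. \<forall>y\<in>N. x + y \<in> N) \<and> (\<forall>x\<in>N. - x \<in> N) \<and>
     (\<forall>r. \<forall>x\<in>N. sm r x \<in> N)"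

definition gen_submodule :: "('r::ring_1 \<Rightarrow> 'm::ab_group_add \<Rightarrow> 'm) \<Rightarrow> 'm set \<Rightarrow> 'm set" where
  "gen_submodule sm X = \<Inter>{N. submodule sm N \<and> X \<subseteq> N}"

definition simple_submodule :: "('r::ring_1 \<Rightarrow> 'm::ab_group_add \<Rightarrow> 'm) \<Rightarrow> 'm set \<Rightarrow> bool" where
  "simple_submodule sm S \<longleftrightarrow> submodule sm S \<and> S \<noteq> {0} \<and>
     (\<forall>T. submodule sm T \<and> T \<subseteq> S \<longrightarrow> T = {0} \<or> T = S)"

definition semisimple_module :: "('r::ring_1 \<Rightarrow> 'm::ab_group_add \<Rightarrow> 'm) \<Rightarrow> bool" where
  "semisimple_module sm \<longleftrightarrow> (\<exists>\<S>.
     (\<forall>S\<in>\<S>. simple_submodule sm S) \<and>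
     gen_submodule sm (\<Union>\<S>) = UNIV \<and>
     (\<forall>S\<in>\<S>. S \<inter> gen_submodule sm (\<Union>(\<S> - {S})) = {0}))"

definition semisimple_ring :: "'r::ring_1 itself \<Rightarrow> bool" where
  "semisimple_ring _ \<longleftrightarrow> semisimple_module ((*) :: 'r \<Rightarrow> 'r \<Rightarrow> 'r)"

definition ideal2 :: "'r::ring_1 set \<Rightarrow> bool" where
  "ideal2 I \<longleftrightarrow> 0 \<in> I \<and> (\<forall>x\<in>I. \<forall>y\<in>I. x + y \<in> I) \<and> (\<forall>x\<in>I. - x \<in> I) \<and>
     (\<forall>r. \<forall>x\<in>I. r * x \<in> I \<and> x * r \<in> I)"

definition prime_ideal2 :: "'r::ring_1 set \<Rightarrow> bool" where
  "prime_ideal2 P \<longleftrightarrow> ideal2 P \<and> P \<noteq> UNIV \<and>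
     (\<forall>a b. (\<forall>r. a * r * b \<in> P) \<longrightarrow> a \<in> P \<or> b \<in> P)"

definition prime_radical :: "'r::ring_1 itself \<Rightarrow> 'r set" where
  "prime_radical _ = \<Inter>{P :: 'r set. prime_ideal2 P}"

definition two_primal :: "'r::ring_1 itself \<Rightarrow> bool" where
  "two_primal T \<longleftrightarrow> {x :: 'r. \<exists>n. x ^ n = 0} = prime_radical T"

definition completely_prime_submodule ::
  "('r::ring_1 \<Rightarrow> 'm::ab_group_add \<Rightarrow> 'm) \<Rightarrow> 'm set \<Rightarrow> bool" where
  "completely_prime_submodule sm P \<longleftrightarrow> submodule sm P \<and>
     \<not> (gen_submodule sm {sm r x | r x. True} \<subseteq> P) \<and>
     (\<forall>r x. sm r x \<in> P \<longrightarrow> x \<in> P \<or> (\<forall>y. sm r y \<in> P))"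

definition beta_co :: "('r::ring_1 \<Rightarrow> 'm::ab_group_add \<Rightarrow> 'm) \<Rightarrow> 'm set \<Rightarrow> 'm set" where
  "beta_co sm N = \<Inter>{P. completely_prime_submodule sm P \<and> N \<subseteq> P}"

definition E_M :: "('r::ring_1 \<Rightarrow> 'm::ab_group_add \<Rightarrow> 'm) \<Rightarrow> 'm set \<Rightarrow> 'm set" where
  "E_M sm N = {sm r x | r x. \<exists>k::nat. 0 < k \<and> sm (r ^ k) x \<in> N}"

end

theory Submission
  imports Defs
begin

lemma lm_basic:
  assumes "lmodule sm"
  shows "sm r 0 = 0" "sm 0 x = 0" "sm (-r) x = - sm r x" "sm r (-x) = - sm r x"
    "sm r (x+y) = sm r x + sm r y" "sm (r*s) x = sm r (sm s x)" "sm 1 x = x" "sm (r+s) x = sm r x + sm s x"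
proof -
  have a: "\<And>r x y. sm r (x + y) = sm r x + sm r y" and b: "\<And>r s x. sm (r + s) x = sm r x + sm s x"
    and c: "\<And>r s x. sm (r * s) x = sm r (sm s x)" and d: "\<And>x. sm 1 x = x"
    using assms unfolding lmodule_def by auto
  show 0: "sm r 0 = 0" using a[of r 0 0] by simp
  show 1: "sm 0 x = 0" using b[of 0 0 x] by simp
  show "sm (-r) x = - sm r x" using b[of r "-r" x] 1 by (simp add: eq_neg_iff_add_eq_0 add.commute)
  show "sm r (-x) = - sm r x" using a[of r x "-x"] 0 by (simp add: eq_neg_iff_add_eq_0 add.commute)
  show "sm r (x+y) = sm r x + sm r y" by (rule a)
  show "sm (r+s) x = sm r x + sm s x" by (rule b)
  show "sm (r*s) x = sm r (sm s x)" by (rule c)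
  show "sm 1 x = x" by (rule d)
qed

lemma gen_least: "submodule sm Q \<Longrightarrow> X \<subseteq> Q \<Longrightarrow> gen_submodule sm X \<subseteq> Q"
  unfolding gen_submodule_def by auto

lemma gen_sup: "X \<subseteq> gen_submodule sm X"
  unfolding gen_submodule_def by auto

lemma simple_eq:
  assumes "simple_submodule sm S" "submodule sm T" "T \<subseteq> S" "z \<in> T" "z \<noteq> 0"
  shows "T = S"
  using assms unfolding simple_submodule_def by blast

lemma cp_pow:
  assumes "completely_prime_submodule sm P" "lmodule sm"
  shows "0 < k \<Longrightarrow> sm (r ^ k) x \<in> P \<Longrightarrow> sm r x \<in> P"
proof (induction k)
  case 0 then show ?case by simp
next
  case (Suc j)
  show ?case
  proof (cases "j = 0")
    case True then show ?thesis using Suc by simp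
  next
    case False
    have "sm r (sm (r^j) x) \<in> P" using Suc.prems lm_basic(6)[OF assms(2)] by (metis power_Suc)
    then have "sm (r^j) x \<in> P \<or> (\<forall>y. sm r y \<in> P)"
      using assms(1) unfolding completely_prime_submodule_def by blast
    then show ?thesis using Suc.IH False by blast
  qed
qed

lemma sum_list_in:
  assumes "ideal2 I" "\<forall>z\<in>set xs. z \<in> I" shows "sum_list xs \<in> I"
  using assms by (induction xs) (auto simp: ideal2_def)

lemma sum_list_filter_mult:
  fixes a :: "'r::ring_1"
  assumes "\<forall>z\<in>set xs. z \<notin> I \<longrightarrow> a*z = 0"
  shows "a * sum_list xs = a * sum_list (filter (\<lambda>z. z \<in> I) xs)"
  using assms by (induction xs) (auto simp: distrib_left)

lemma sum_list_uminus: "sum_list (map uminus xs) = - sum_list (xs :: 'a::ab_group_add list)"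
  by (induction xs) auto

lemma sum_list_mult: "sum_list (map ((*) r) xs) = (r::'a::ring) * sum_list xs"
  by (induction xs) (auto simp: distrib_left)

lemma reduced:
  assumes ss: "semisimple_ring TYPE('r::ring_1)" and tp: "two_primal TYPE('r)"
  shows "\<forall>x::'r. x * x = 0 \<longrightarrow> x = 0"
proof -
  define I where "I = {x :: 'r. \<exists>n. x ^ n = 0}"
  have "I = \<Inter>{P :: 'r set. prime_ideal2 P}"
    using tp unfolding two_primal_def prime_radical_def I_def by simp
  then have idI: "ideal2 I" unfolding ideal2_def prime_ideal2_def by auto
  obtain \<S> where simp\<S>: "\<forall>S\<in>\<S>. simple_submodule ((*) :: 'r \<Rightarrow> 'r \<Rightarrow> 'r) S"
    and genS: "gen_submodule ((*) :: 'r \<Rightarrow> 'r \<Rightarrow> 'r) (\<Union>\<S>) = UNIV"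
    using ss unfolding semisimple_ring_def semisimple_module_def by blast
  define Q where "Q = {y :: 'r. \<exists>xs. (\<forall>z\<in>set xs. \<exists>S\<in>\<S>. z \<in> S) \<and> y = sum_list xs}"
  have "submodule ((*) :: 'r \<Rightarrow> 'r \<Rightarrow> 'r) Q"
    unfolding submodule_def
  proof (intro conjI ballI allI)
    show "0 \<in> Q" unfolding Q_def by (rule CollectI, rule exI[of _ "[]"]) simp
  next
    fix x y assume "x \<in> Q" "y \<in> Q"
    then obtain xs ys where "\<forall>z\<in>set xs. \<exists>S\<in>\<S>. z \<in> S" "x = sum_list xs"
      "\<forall>z\<in>set ys. \<exists>S\<in>\<S>. z \<in> S" "y = sum_list ys" unfolding Q_def by blast
    then show "x + y \<in> Q" unfolding Q_def by (intro CollectI exI[of _ "xs @ ys"]) auto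
  next
    fix x assume "x \<in> Q"
    then obtain xs where h: "\<forall>z\<in>set xs. \<exists>S\<in>\<S>. z \<in> S" "x = sum_list xs" unfolding Q_def by blast
    have "\<forall>z\<in>set (map uminus xs). \<exists>S\<in>\<S>. z \<in> S"
      using h(1) simp\<S> unfolding simple_submodule_def submodule_def by fastforce
    then show "- x \<in> Q" unfolding Q_def using h(2) sum_list_uminus[of xs]
      by (intro CollectI exI[of _ "map uminus xs"]) auto
  next
    fix r x assume "x \<in> Q"
    then obtain xs where h: "\<forall>z\<in>set xs. \<exists>S\<in>\<S>. z \<in> S" "x = sum_list xs" unfolding Q_def by blast
    have "\<forall>z\<in>set (map ((*) r) xs). \<exists>S\<in>\<S>. z \<in> S"
      using h(1) simp\<S> unfolding simple_submodule_def submodule_def by fastforce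
    then show "r * x \<in> Q" unfolding Q_def using h(2) sum_list_mult[of r xs]
      by (intro CollectI exI[of _ "map ((*) r) xs"]) auto
  qed
  moreover have "\<Union>\<S> \<subseteq> Q" unfolding Q_def
    by (auto intro!: exI[of _ "[_]"])
  ultimately have "UNIV \<subseteq> Q" using gen_least genS by metis
  then obtain xs where xs: "\<forall>z\<in>set xs. \<exists>S\<in>\<S>. z \<in> S" "(1::'r) = sum_list xs"
    unfolding Q_def by blast
  define f where "f = sum_list (filter (\<lambda>z. z \<in> I) xs)"
  have fI: "f \<in> I" unfolding f_def using idI by (intro sum_list_in) auto
  have af: "a = a * f" if aI: "a \<in> I" for a
  proof -
    have "\<forall>z\<in>set xs. z \<notin> I \<longrightarrow> a*z = 0"
    proof (intro ballI impI)
      fix z assume zx: "z \<in> set xs" and zI: "z \<notin> I"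
      obtain S where S: "S \<in> \<S>" "z \<in> S" using xs(1) zx by blast
      have simS: "simple_submodule ((*) :: 'r \<Rightarrow> 'r \<Rightarrow> 'r) S" using simp\<S> S by blast
      have smS: "submodule ((*) :: 'r \<Rightarrow> 'r \<Rightarrow> 'r) S" using simS unfolding simple_submodule_def by blast
      have "submodule ((*) :: 'r \<Rightarrow> 'r \<Rightarrow> 'r) (S \<inter> I)"
        using smS idI unfolding submodule_def ideal2_def by auto
      moreover have "a*z \<in> S \<inter> I" using smS idI aI S(2) unfolding submodule_def ideal2_def by auto
      ultimately show "a*z = 0" using simple_eq[OF simS, of "S \<inter> I" "a*z"] zI S(2) by blast
    qed
    from sum_list_filter_mult[OF this] show ?thesis using xs(2) f_def by (metis mult.right_neutral)
  qed
  have ff: "f * f = f" using af[OF fI] by simp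
  have fpow: "f ^ Suc n = f" for n by (induction n) (auto simp: ff mult.assoc[symmetric])
  obtain n where "f ^ n = 0" using fI unfolding I_def by blast
  then have f0: "f = 0"
  proof (cases n)
    case 0
    then have "(1::'r) = 0" using \<open>f ^ n = 0\<close> by simp
    then show ?thesis by (metis mult.right_neutral mult_zero_right)
  next
    case (Suc m) then show ?thesis using \<open>f ^ n = 0\<close> fpow by simp
  qed
  show ?thesis
  proof (intro allI impI)
    fix x :: 'r assume "x * x = 0"
    then have "x ^ 2 = 0" by (simp add: power2_eq_square)
    then have "x \<in> I" unfolding I_def by blast
    then have "x = x * f" by (rule af)
    then show "x = 0" using f0 by simp
  qed
qed

lemma brauer:
  fixes S :: "'r::ring_1 set"
  assumes red: "\<forall>x::'r. x * x = 0 \<longrightarrow> x = 0" and simS: "simple_submodule (*) S"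
  shows "\<exists>e\<in>S. (\<forall>s\<in>S. s = s * e) \<and> (\<forall>r. e * r = r * e) \<and>
           (\<forall>r. e * r = 0 \<or> (\<exists>u. u * (e * r) = e))"
proof -
  have smS: "submodule (*) S" using simS unfolding simple_submodule_def by blast
  have cl: "\<And>r x. x \<in> S \<Longrightarrow> r * x \<in> S" "\<And>x y. x \<in> S \<Longrightarrow> y \<in> S \<Longrightarrow> x + y \<in> S"
    "\<And>x. x \<in> S \<Longrightarrow> -x \<in> S" "0 \<in> S"
    using smS unfolding submodule_def by auto
  have "S \<noteq> {0}" using simS unfolding simple_submodule_def by blast
  then obtain s where s: "s \<in> S" "s \<noteq> 0" using cl(4) by blast
  have "s * s \<noteq> 0" using red s by blast
  have "submodule (*) {t * s | t. t \<in> S}"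
    unfolding submodule_def
  proof (intro conjI ballI allI)
    show "0 \<in> {t * s | t. t \<in> S}" using cl(4) by force
    fix x y assume "x \<in> {t * s | t. t \<in> S}" "y \<in> {t * s | t. t \<in> S}"
    then obtain t1 t2 where "x = t1 * s" "y = t2*s" "t1 \<in> S" "t2 \<in> S" by blast
    then show "x + y \<in> {t * s | t. t \<in> S}" using cl(2) by (auto simp: distrib_right intro!: exI[of _ "t1+t2"])
  next
    fix x assume "x \<in> {t * s | t. t \<in> S}"
    then obtain t1 where "x = t1 * s" "t1 \<in> S" by blast
    then show "-x \<in> {t * s | t. t \<in> S}" using cl(3) by (auto intro!: exI[of _ "-t1"])
  next
    fix r x assume "x \<in> {t * s | t. t \<in> S}"
    then obtain t1 where "x = t1 * s" "t1 \<in> S" by blast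
    then show "r * x \<in> {t * s | t. t \<in> S}" using cl(1) by (auto simp: mult.assoc intro!: exI[of _ "r*t1"])
  qed
  moreover have "{t * s | t. t \<in> S} \<subseteq> S" using cl(1) s(1) smS
    using cl(1) by blast
  ultimately have "{t * s | t. t \<in> S} = S"
    using simple_eq[OF simS, of _ "s*s"] s \<open>s*s \<noteq> 0\<close> by blast
  then have "s \<in> {t * s | t. t \<in> S}" using s(1) by simp
  then obtain e where e0': "s = e * s" "e \<in> S" by (elim CollectE exE conjE) (rule that)
  then have e: "e \<in> S" "e * s = s" by simp_all
  have "submodule (*) {a\<in>S. a * s = 0}" using cl unfolding submodule_def
    by (auto simp: distrib_right mult.assoc)
  moreover have "e \<notin> {a\<in>S. a * s = 0}" using e s by auto
  ultimately have ann: "a = 0" if "a \<in> S" "a * s = 0" for a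
  proof -
    assume sm1: "submodule (*) {a\<in>S. a * s = 0}" and ne: "e \<notin> {a\<in>S. a * s = 0}"
    show "a = 0"
    proof (rule ccontr)
      assume "a \<noteq> 0"
      moreover have "{a\<in>S. a * s = 0} \<subseteq> S" by blast
      moreover have "a \<in> {a\<in>S. a * s = 0}" using that by blast
      ultimately have "{a\<in>S. a * s = 0} = S" using simple_eq[OF simS sm1] by blast
      then show False using ne e(1) by blast
    qed
  qed
  have "(e*e - e) * s = 0" using e by (simp add: left_diff_distrib mult.assoc)
  moreover have "e*e - e \<in> S" using cl e(1) by (metis diff_conv_add_uminus)
  ultimately have "e*e - e = 0" by (rule ann[rotated])
  then have ee: "e * e = e" by simp
  have e0: "e \<noteq> 0" using e s by auto
  have smRe: "submodule (*) {r * x | r. True}" if "x \<in> S" for x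
    unfolding submodule_def
  proof (intro conjI ballI allI)
    show "0 \<in> {r * x | r. True}" by (intro CollectI exI[of _ 0]) simp
    fix a b assume "a \<in> {r * x | r. True}" "b \<in> {r * x | r. True}"
    then obtain r1 r2 where "a = r1 * x" "b = r2 * x" by blast
    then show "a + b \<in> {r * x | r. True}" by (intro CollectI exI[of _ "r1 + r2"]) (simp add: distrib_right)
  next
    fix a assume "a \<in> {r * x | r. True}"
    then obtain r1 where "a = r1 * x" by blast
    then show "- a \<in> {r * x | r. True}" by (intro CollectI exI[of _ "- r1"]) simp
  next
    fix t a assume "a \<in> {r * x | r. True}"
    then obtain r1 where "a = r1 * x" by blast
    then show "t * a \<in> {r * x | r. True}" by (intro CollectI exI[of _ "t * r1"]) (simp add: mult.assoc)
  qed
  have Re: "{r * x | r. True} = S" if "x \<in> S" "x \<noteq> 0" for x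
  proof (rule simple_eq[OF simS smRe[OF that(1)]])
    show "{r * x | r. True} \<subseteq> S" using cl(1) that(1) by blast
    show "x \<in> {r * x | r. True}" by (intro CollectI exI[of _ 1]) simp
    show "x \<noteq> 0" by (rule that(2))
  qed
  have sse: "\<forall>s\<in>S. s = s * e"
  proof
    fix t assume "t \<in> S"
    then have "t \<in> {r * e | r. True}" using Re[OF e(1) e0] by simp
    then obtain r where "t = r * e" by (elim CollectE exE conjE) (rule that)
    then show "t = t * e" using ee by (simp add: mult.assoc)
  qed
  have cent: "e * r = r * e" for r
  proof -
    define c where "c = r*e - e*r*e"
    have ee': "e * (e * y) = e * y" for y by (simp add: mult.assoc[symmetric] ee)
    have "c * e = c" unfolding c_def by (simp add: left_diff_distrib mult.assoc ee)
    moreover have "e * c = 0" unfolding c_def by (simp add: right_diff_distrib mult.assoc ee ee')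
    ultimately have "c * c = 0" by (metis mult.assoc mult_zero_right)
    then have "c = 0" using red by blast
    then have c0: "r*e = e*r*e" unfolding c_def by simp
    define d where "d = e*r - e*r*e"
    have "e * d = d" unfolding d_def by (simp add: right_diff_distrib mult.assoc ee ee')
    moreover have "d * e = 0" unfolding d_def by (simp add: left_diff_distrib mult.assoc ee)
    ultimately have "d * d = 0" by (metis mult.assoc mult_zero_left)
    then have "d = 0" using red by blast
    then have "e*r = e*r*e" unfolding d_def by simp
    then show ?thesis using c0 by simp
  qed
  have div: "e * r = 0 \<or> (\<exists>u. u * (e * r) = e)" for r
  proof (cases "e * r = 0")
    case False
    have "r * e \<in> S" using cl(1) e(1) by blast
    moreover have "r * e \<noteq> 0" using False cent[of r] by argo
    ultimately have "{t * (r*e) | t. True} = S" by (rule Re)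
    then have "e \<in> {t * (r*e) | t. True}" using e(1) by simp
    then obtain u where "e = u * (r * e)" by (elim CollectE exE conjE) (rule that)
    then have "u * (r * e) = e" by simp
    then have "u * (e * r) = e" using cent[of r] by argo
    then show ?thesis by blast
  qed simp
  show ?thesis using e(1) sse cent div by blast
qed

theorem corollary4p24:
  fixes sm :: "'r::ring_1 \<Rightarrow> 'm::ab_group_add \<Rightarrow> 'm"
    and N :: "'m set"
  assumes "semisimple_ring TYPE('r)"
    and "two_primal TYPE('r)"
    and "lmodule sm"
    and "submodule sm N"
  shows "gen_submodule sm (E_M sm N) = beta_co sm N"
proof
  have L: "sm (r*s) x = sm r (sm s x)" "sm 1 x = x" "sm r 0 = 0" "sm 0 x = 0"
    "sm r (x+y) = sm r x + sm r y" "sm r (-x) = - sm r x"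
    "sm (r+s) x = sm r x + sm s x" "sm (-r) x = - sm r x" for r s x y
    using lm_basic[OF assms(3)] by auto
  have Ncl: "0 \<in> N" "\<And>x y. x\<in>N \<Longrightarrow> y\<in>N \<Longrightarrow> x + y \<in> N" "\<And>x. x\<in>N \<Longrightarrow> -x \<in> N"
    "\<And>r x. x \<in> N \<Longrightarrow> sm r x \<in> N" using assms(4) unfolding submodule_def by auto
  show "gen_submodule sm (E_M sm N) \<subseteq> beta_co sm N"
    unfolding beta_co_def
  proof (rule Inter_greatest)
    fix P assume "P \<in> {P. completely_prime_submodule sm P \<and> N \<subseteq> P}"
    then have P: "completely_prime_submodule sm P" "N \<subseteq> P" by auto
    have "E_M sm N \<subseteq> P" unfolding E_M_def using cp_pow[OF P(1) assms(3)] P(2) by blast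
    moreover have "submodule sm P" using P(1) unfolding completely_prime_submodule_def by blast
    ultimately show "gen_submodule sm (E_M sm N) \<subseteq> P" using gen_least by blast
  qed
  have NE: "N \<subseteq> gen_submodule sm (E_M sm N)"
  proof -
    have "N \<subseteq> E_M sm N" unfolding E_M_def using L(2)
      by (auto intro!: exI[of _ 1])
    then show ?thesis using gen_sup by blast
  qed
  have red: "\<forall>x::'r. x * x = 0 \<longrightarrow> x = 0" using reduced assms(1,2) by blast
  obtain \<S> where simp\<S>: "\<forall>S\<in>\<S>. simple_submodule ((*) :: 'r \<Rightarrow> 'r \<Rightarrow> 'r) S"
    and genS: "gen_submodule ((*) :: 'r \<Rightarrow> 'r \<Rightarrow> 'r) (\<Union>\<S>) = UNIV"
    using assms(1) unfolding semisimple_ring_def semisimple_module_def by blast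
  have "beta_co sm N \<subseteq> N"
  proof
    fix x assume xb: "x \<in> beta_co sm N"
    show "x \<in> N"
    proof (rule ccontr)
      assume xN: "x \<notin> N"
      define Q where "Q = {r. sm r x \<in> N}"
      have "submodule ((*) :: 'r \<Rightarrow> 'r \<Rightarrow> 'r) Q" unfolding submodule_def Q_def
      proof (intro conjI ballI allI; clarsimp)
        show "sm 0 x \<in> N" using Ncl(1) L(4) by simp
        show "sm (a + b) x \<in> N" if "sm a x \<in> N" "sm b x \<in> N" for a b
          using that Ncl(2) L(7)[of a b x] by simp
        show "sm (- a) x \<in> N" if "sm a x \<in> N" for a
          using that Ncl(3) L(8)[of a x] by simp
        show "sm (r * a) x \<in> N" if "sm a x \<in> N" for r a
          using that Ncl(4) L(1)[of r a x] by simp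
      qed
      moreover have "1 \<notin> Q" using xN L(2) Q_def by simp
      ultimately have "\<not> \<Union>\<S> \<subseteq> Q"
      proof (intro notI)
        assume a: "submodule (*) Q" "1 \<notin> Q" "\<Union>\<S> \<subseteq> Q"
        have "gen_submodule (*) (\<Union>\<S>) \<subseteq> Q" using a(1) a(3) by (rule gen_least)
        then show False using genS \<open>1 \<notin> Q\<close> by blast
      qed
      then obtain S s where S: "S \<in> \<S>" "s \<in> S" "sm s x \<notin> N" unfolding Q_def by blast
      obtain e where e: "e \<in> S" "\<forall>s\<in>S. s = s * e" "\<forall>r. e * r = r * e"
        "\<forall>r. e * r = 0 \<or> (\<exists>u. u * (e * r) = e)"
      proof -
        have "simple_submodule ((*) :: 'r \<Rightarrow> 'r \<Rightarrow> 'r) S" using simp\<S> S(1) by blast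
        from brauer[OF red this] show ?thesis using that by blast
      qed
      have exN: "sm e x \<notin> N"
      proof
        assume "sm e x \<in> N"
        then have "sm s (sm e x) \<in> N" using Ncl(4) by blast
        moreover have "s = s * e" using e(2) S(2) by (rule bspec)
        moreover have "sm (s * e) x = sm s (sm e x)" by (rule L(1))
        ultimately have "sm (s * e) x \<in> N" by argo
        moreover have "sm s x = sm (s * e) x" using \<open>s = s * e\<close> by (rule arg_cong[where f="\<lambda>t. sm t x"])
        ultimately show False using S(3) by argo
      qed
      define P where "P = {y. sm e y \<in> N}"
      have "completely_prime_submodule sm P" unfolding completely_prime_submodule_def
      proof (intro conjI allI impI)
        show "submodule sm P" unfolding submodule_def P_def
        proof (intro conjI ballI allI; clarsimp)
          show "sm e 0 \<in> N" using Ncl(1) by (simp add: L(3))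
          show "sm e (a + b) \<in> N" if "sm e a \<in> N" "sm e b \<in> N" for a b
            using that Ncl(2) by (simp add: L(5))
          show "sm e (- a) \<in> N" if "sm e a \<in> N" for a
            using that Ncl(3) by (simp add: L(6))
          show "sm e (sm r a) \<in> N" if "sm e a \<in> N" for r a
          proof -
            have "sm e (sm r a) = sm (e * r) a" by (rule L(1)[symmetric])
            also have "\<dots> = sm (r * e) a"
            proof -
              have "e * r = r * e" using e(3) by blast
              then show ?thesis by (rule arg_cong)
            qed
            also have "\<dots> = sm r (sm e a)" by (rule L(1))
            finally have "sm e (sm r a) = sm r (sm e a)" .
            then show ?thesis using that Ncl(4) by simp
          qed
        qed
        have "x \<in> {sm r x | r x. True}" using L(2)[of x] by (intro CollectI exI[of _ 1] exI[of _ x]) simp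
        then have "x \<in> gen_submodule sm {sm r x | r x. True}" by (rule subsetD[OF gen_sup])
        moreover have "x \<notin> P" using exN unfolding P_def by simp
        ultimately show "\<not> gen_submodule sm {sm r x | r x. True} \<subseteq> P" by blast
      next
        fix r y assume "sm r y \<in> P"
        then have h: "sm (e*r) y \<in> N" using P_def L(1) by simp
        show "y \<in> P \<or> (\<forall>z. sm r z \<in> P)"
        proof (cases "e * r = 0")
          case True then show ?thesis unfolding P_def using Ncl(1) by (simp add: L(1)[symmetric] L(4))
        next
          case False
          then obtain u where "u * (e * r) = e" using e(4) by blast
          then have "sm e y = sm (u * (e * r)) y" by simp
          then have "sm e y = sm u (sm (e*r) y)" using L(1)[of u "e*r" y] by argo
          then show ?thesis using h Ncl(4) P_def by auto
        qed
      qed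
      moreover have "N \<subseteq> P" unfolding P_def using Ncl(4) by blast
      ultimately have "x \<in> P" using xb unfolding beta_co_def by blast
      then show False using exN P_def by simp
    qed
  qed
  then show "beta_co sm N \<subseteq> gen_submodule sm (E_M sm N)" using NE by blast
qed

end
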